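(* For every $B>0$ there is an online algorithm for the online packing problem which, irrevocably assigning each arriving variable $y_i\ge 0$ when it arrives, achieves $\sum_i y_i\ge \mathsf{OPT}/B$ (i.e., it is $1/B$-competitive), changes $y$ (sets some $y_i>0$) in at most $\mathrm{poly}(n,\log B',\log\mathsf{OPT},\log\alpha)$ rounds, and for every packing constraint $j\in[n]$ satisfies $$\sum_{i=1}^m a_{ij}y_i = c_j\cdot O\!\left(\frac{\log n+\log(a^{\max}_j/a^{\min}_j)}{B}\right).$$
   Context: Online packing problem: the LP is $\max \sum_i y_i$ over $y\in\mathbb{R}^m_{\ge 0}$ subject to $A^T y\le c$, where $A=(a_{ij})\in\mathbb{R}^{m\times n}_{\ge0}$ and $c\in\mathbb{R}^n_{>0}$ is known in advance. The variables $y_i$ (columns of $A^T$, i.e. the values $a_{i1},\dots,a_{in}$, at least one positive) arrive one at a time, $m$ possibly unknown; upon arrival $y_i$ is either left at $0$ or irrevocably assigned a positive value. $\mathsf{OPT}$ is the optimal value of the packing LP. $a^{\max}_j=\max_{i\in[m]}a_{ij}$, $a^{\min}_j=\min_{i\in[m]}\{a_{ij}:a_{ij}>0\}$, $\alpha=\max_{j\in[n]}a^{\max}_j/c_j$, and $B'=3\max_{j\in[n]}\ln(2na^{\max}_j/a^{\min}_j+1)$. *)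

theory Defs
  imports Complex_Main
begin

text \<open>An instance of the online packing problem: n constraints, m arriving variables,
  matrix A (A i j = a_ij, i < m, j < n), capacities c j (j < n).\<close>

definition valid_instance :: "nat \<Rightarrow> nat \<Rightarrow> (nat \<Rightarrow> nat \<Rightarrow> real) \<Rightarrow> (nat \<Rightarrow> real) \<Rightarrow> bool" where
  "valid_instance n m A c \<longleftrightarrow> n \<ge> 1 \<and> m \<ge> 1 \<and> (\<forall>j<n. c j > 0)
     \<and> (\<forall>i<m. \<forall>j<n. A i j \<ge> 0) \<and> (\<forall>i<m. \<exists>j<n. A i j > 0)"

definition packing_feasible :: "nat \<Rightarrow> nat \<Rightarrow> (nat \<Rightarrow> nat \<Rightarrow> real) \<Rightarrow> (nat \<Rightarrow> real) \<Rightarrow> (nat \<Rightarrow> real) \<Rightarrow> bool" where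
  "packing_feasible n m A c y \<longleftrightarrow> (\<forall>i<m. y i \<ge> 0) \<and> (\<forall>j<n. (\<Sum>i<m. A i j * y i) \<le> c j)"

definition OPT :: "nat \<Rightarrow> nat \<Rightarrow> (nat \<Rightarrow> nat \<Rightarrow> real) \<Rightarrow> (nat \<Rightarrow> real) \<Rightarrow> real" where
  "OPT n m A c = Sup {(\<Sum>i<m. y i) | y. packing_feasible n m A c y}"

definition amax :: "nat \<Rightarrow> (nat \<Rightarrow> nat \<Rightarrow> real) \<Rightarrow> nat \<Rightarrow> real" where
  "amax m A j = Max {A i j | i. i < m}"

definition amin :: "nat \<Rightarrow> (nat \<Rightarrow> nat \<Rightarrow> real) \<Rightarrow> nat \<Rightarrow> real" where
  "amin m A j = Min {A i j | i. i < m \<and> A i j > 0}"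

definition alpha :: "nat \<Rightarrow> nat \<Rightarrow> (nat \<Rightarrow> nat \<Rightarrow> real) \<Rightarrow> (nat \<Rightarrow> real) \<Rightarrow> real" where
  "alpha n m A c = Max {amax m A j / c j | j. j < n}"

definition Bprime :: "nat \<Rightarrow> nat \<Rightarrow> (nat \<Rightarrow> nat \<Rightarrow> real) \<Rightarrow> real" where
  "Bprime n m A = 3 * Max {ln (2 * real n * amax m A j / amin m A j + 1) | j. j < n}"

text \<open>A deterministic online algorithm receives n, the capacity vector c (as a list of
  length n) and the list of all columns that have arrived so far (each a list of length n,
  the current one last), and returns the value of the current variable. It never sees m,
  and earlier values cannot be revised, since y_i depends only on the first i+1 columns.\<close>
type_synonym online_alg = "nat \<Rightarrow> real list \<Rightarrow> real list list \<Rightarrow> real"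

definition run :: "online_alg \<Rightarrow> nat \<Rightarrow> (nat \<Rightarrow> nat \<Rightarrow> real) \<Rightarrow> (nat \<Rightarrow> real) \<Rightarrow> nat \<Rightarrow> real" where
  "run alg n A c i = alg n (map c [0..<n]) (map (\<lambda>k. map (A k) [0..<n]) [0..<Suc i])"

end

theory Submission
  imports Defs
begin


definition bb :: "(nat \<Rightarrow> nat \<Rightarrow> real) \<Rightarrow> (nat \<Rightarrow> real) \<Rightarrow> nat \<Rightarrow> nat \<Rightarrow> real" where
  "bb A c k j = A k j / c j"

fun bmx :: "(nat \<Rightarrow> nat \<Rightarrow> real) \<Rightarrow> (nat \<Rightarrow> real) \<Rightarrow> nat \<Rightarrow> nat \<Rightarrow> real" where
  "bmx A c 0 j = bb A c 0 j"
| "bmx A c (Suc k) j = max (bmx A c k j) (bb A c (Suc k) j)"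

definition bet :: "nat \<Rightarrow> (nat \<Rightarrow> nat \<Rightarrow> real) \<Rightarrow> (nat \<Rightarrow> real) \<Rightarrow> nat \<Rightarrow> nat \<Rightarrow> real" where
  "bet n A c k j = 1 / (real n * bmx A c k j)"

definition gf :: "nat \<Rightarrow> (nat \<Rightarrow> nat \<Rightarrow> real) \<Rightarrow> (nat \<Rightarrow> real) \<Rightarrow> nat \<Rightarrow> (nat \<Rightarrow> real) \<Rightarrow> real \<Rightarrow> real" where
  "gf n A c k xv t = (\<Sum>j<n. bb A c k j * ((xv j + bet n A c k j) * exp (bb A c k j * t) - bet n A c k j))"

definition tst :: "nat \<Rightarrow> (nat \<Rightarrow> nat \<Rightarrow> real) \<Rightarrow> (nat \<Rightarrow> real) \<Rightarrow> nat \<Rightarrow> (nat \<Rightarrow> real) \<Rightarrow> real" where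
  "tst n A c k xv = (if gf n A c k xv 0 < 1 then (SOME t. 0 \<le> t \<and> gf n A c k xv t = 2) else 0)"

definition upd :: "nat \<Rightarrow> (nat \<Rightarrow> nat \<Rightarrow> real) \<Rightarrow> (nat \<Rightarrow> real) \<Rightarrow> nat \<Rightarrow> (nat \<Rightarrow> real) \<Rightarrow> nat \<Rightarrow> real" where
  "upd n A c k xv = (\<lambda>j. (xv j + bet n A c k j) * exp (bb A c k j * tst n A c k xv) - bet n A c k j)"

primrec xs :: "nat \<Rightarrow> (nat \<Rightarrow> nat \<Rightarrow> real) \<Rightarrow> (nat \<Rightarrow> real) \<Rightarrow> nat \<Rightarrow> nat \<Rightarrow> real" where
  "xs n A c 0 = (\<lambda>j. 0)"
| "xs n A c (Suc k) = upd n A c k (xs n A c k)"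

definition yv :: "nat \<Rightarrow> (nat \<Rightarrow> nat \<Rightarrow> real) \<Rightarrow> (nat \<Rightarrow> real) \<Rightarrow> nat \<Rightarrow> real" where
  "yv n A c k = tst n A c k (xs n A c k)"

definition theAlg :: "real \<Rightarrow> online_alg" where
  "theAlg B n cs cols = 3 / B * yv n (\<lambda>l j. cols ! l ! j) (\<lambda>j. cs ! j) (length cols - 1)"

lemma bmx_cong:
  assumes "\<forall>l\<le>k. A l j = A' l j" "c j = c' j"
  shows "bmx A c k j = bmx A' c' k j"
  using assms by (induction k) (auto simp: bb_def)

lemma gf_cong:
  assumes "\<forall>l\<le>k. \<forall>j<n. A l j = A' l j" "\<forall>j<n. c j = c' j" "\<forall>j<n. xv j = xv' j"
  shows "gf n A c k xv = gf n A' c' k xv'"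
proof
  fix t
  have "\<And>j. j < n \<Longrightarrow> bmx A c k j = bmx A' c' k j"
    using assms by (intro bmx_cong) auto
  then show "gf n A c k xv t = gf n A' c' k xv' t"
    unfolding gf_def bet_def using assms by (intro sum.cong) (auto simp: bb_def)
qed

lemma tst_cong:
  assumes "\<forall>l\<le>k. \<forall>j<n. A l j = A' l j" "\<forall>j<n. c j = c' j" "\<forall>j<n. xv j = xv' j"
  shows "tst n A c k xv = tst n A' c' k xv'"
  unfolding tst_def using gf_cong[OF assms] by simp

lemma xs_cong:
  assumes "\<forall>l<k. \<forall>j<n. A l j = A' l j" "\<forall>j<n. c j = c' j"
  shows "\<forall>j<n. xs n A c k j = xs n A' c' k j"
  using assms
proof (induction k)
  case 0
  then show ?case by simp
next
  case (Suc k)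
  then have IH: "\<forall>j<n. xs n A c k j = xs n A' c' k j" by auto
  have T: "tst n A c k (xs n A c k) = tst n A' c' k (xs n A' c' k)"
    using Suc.prems IH by (intro tst_cong) auto
  have "\<And>j. j < n \<Longrightarrow> bmx A c k j = bmx A' c' k j"
    using Suc.prems by (intro bmx_cong) auto
  then show ?case using T IH Suc.prems by (auto simp: upd_def bet_def bb_def)
qed

lemma yv_cong:
  assumes "\<forall>l\<le>k. \<forall>j<n. A l j = A' l j" "\<forall>j<n. c j = c' j"
  shows "yv n A c k = yv n A' c' k"
  unfolding yv_def using assms xs_cong[of k n A A' c c'] by (intro tst_cong) auto

lemma run_theAlg: "run (theAlg B) n A c i = 3 / B * yv n A c i"
  unfolding run_def theAlg_def
proof -
  have "yv n (\<lambda>l j. map (\<lambda>k. map (A k) [0..<n]) [0..<Suc i] ! l ! j) (\<lambda>j. map c [0..<n] ! j) i = yv n A c i"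
    by (intro yv_cong) (auto simp del: upt_Suc)
  then show "3 / B * yv n (\<lambda>l j. map (\<lambda>k. map (A k) [0..<n]) [0..<Suc i] ! l ! j) (\<lambda>j. map c [0..<n] ! j)
     (length (map (\<lambda>k. map (A k) [0..<n]) [0..<Suc i]) - 1) = 3 / B * yv n A c i"
    by simp
qed



locale inst =
  fixes n :: nat and A :: "nat \<Rightarrow> nat \<Rightarrow> real" and c :: "nat \<Rightarrow> real"
  assumes n1: "n \<ge> 1" and cpos: "\<And>j. j < n \<Longrightarrow> c j > 0"
    and Anneg: "\<And>k j. j < n \<Longrightarrow> A k j \<ge> 0" and Apos: "\<And>k. \<exists>j<n. A k j > 0"
begin

abbreviation "b \<equiv> bb A c"
abbreviation "bm \<equiv> bmx A c"
abbreviation "be \<equiv> bet n A c"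
abbreviation "g \<equiv> gf n A c"
abbreviation "X \<equiv> xs n A c"
abbreviation "Y \<equiv> yv n A c"

lemma b_nn: "j < n \<Longrightarrow> 0 \<le> b k j"
  using cpos[of j] Anneg[of j k] by (simp add: bb_def)

lemma b_pos: "j < n \<Longrightarrow> A k j > 0 \<Longrightarrow> 0 < b k j"
  using cpos[of j] by (simp add: bb_def)

lemma bmx_ge: "b k j \<le> bm k j"
  by (cases k) auto

lemma bmx_mono: "k \<le> k' \<Longrightarrow> bm k j \<le> bm k' j"
proof (induction k' rule: dec_induct)
  case base then show ?case by simp
next
  case (step k') then show ?case by (simp add: le_max_iff_disj)
qed

lemma bmx_ge_l: "l \<le> k \<Longrightarrow> b l j \<le> bm k j"
  using bmx_ge[of l j] bmx_mono[of l k j] by linarith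

lemma bmx_attained: "\<exists>l\<le>k. bm k j = b l j"
proof (induction k)
  case 0 then show ?case by simp
next
  case (Suc k)
  then obtain l where "l \<le> k" "bm k j = b l j" by auto
  then show ?case
    by (cases "bm k j \<le> b (Suc k) j") (auto simp: max_def intro: le_SucI)
qed

lemma bmx_nn: "j < n \<Longrightarrow> 0 \<le> bm k j"
  using bmx_ge[of k j] b_nn[of j k] by linarith

lemma bet_nn: "j < n \<Longrightarrow> 0 \<le> be k j"
  using bmx_nn[of j k] by (simp add: bet_def)

lemma bb_bet: "j < n \<Longrightarrow> b k j * be k j \<le> 1 / real n"
proof (cases "b k j = 0")
  case True then show ?thesis by simp
next
  case False
  assume j: "j < n"
  then have bp: "b k j > 0" using b_nn[of j k] False by linarith
  have "b k j \<le> bm k j" by (rule bmx_ge)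
  then have "b k j / (real n * bm k j) \<le> bm k j / (real n * bm k j)"
    using bp n1 by (intro divide_right_mono) auto
  also have "\<dots> = 1 / real n" using bp \<open>b k j \<le> bm k j\<close> by (simp add: field_simps)
  finally show ?thesis by (simp add: bet_def)
qed

lemma S_le1: "(\<Sum>j<n. b k j * be k j) \<le> 1"
proof -
  have "(\<Sum>j<n. b k j * be k j) \<le> (\<Sum>j<n. 1 / real n)"
    by (intro sum_mono bb_bet) auto
  also have "\<dots> = 1" using n1 by simp
  finally show ?thesis .
qed

lemma S_nn: "0 \<le> (\<Sum>j<n. b k j * be k j)"
  by (intro sum_nonneg mult_nonneg_nonneg b_nn bet_nn) auto

lemma bet_anti: "j < n \<Longrightarrow> k \<le> k' \<Longrightarrow> bm k j > 0 \<Longrightarrow> be k' j \<le> be k j"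
  using bmx_mono[of k k' j] n1 unfolding bet_def
  by (intro divide_left_mono mult_left_mono mult_pos_pos) auto

lemma gf_cont: "continuous_on S (g k xv)"
  unfolding gf_def by (intro continuous_intros)

lemma gf_exists:
  assumes xv: "\<forall>j<n. 0 \<le> xv j" and g0: "g k xv 0 < 1"
  shows "\<exists>t\<ge>0. g k xv t = 2"
proof -
  obtain j0 where j0: "j0 < n" "A k j0 > 0" using Apos by auto
  define b0 where "b0 = b k j0"
  define \<beta> where "\<beta> = be k j0"
  have b0: "b0 > 0" using b_pos[OF j0] by (simp add: b0_def)
  have bm0: "bm k j0 > 0" using bmx_ge[of k j0] b0 b0_def by linarith
  have \<beta>: "\<beta> > 0" using bm0 n1 by (simp add: \<beta>_def bet_def)
  define T where "T = 2 / (b0 * b0 * \<beta>)"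
  have T: "T \<ge> 0" using b0 \<beta> by (simp add: T_def)
  have terms: "\<And>j t. j < n \<Longrightarrow> t \<ge> 0 \<Longrightarrow> 0 \<le> b k j * ((xv j + be k j) * exp (b k j * t) - be k j)"
  proof -
    fix j t assume j: "j < n" and t: "(t::real) \<ge> 0"
    have "exp (b k j * t) \<ge> 1" using b_nn[OF j] t by simp
    then have "(xv j + be k j) * exp (b k j * t) \<ge> (xv j + be k j) * 1"
      using xv j bet_nn[OF j] by (intro mult_left_mono) auto
    then show "0 \<le> b k j * ((xv j + be k j) * exp (b k j * t) - be k j)"
      using xv j b_nn[OF j] by (intro mult_nonneg_nonneg) auto
  qed
  have "b0 * ((xv j0 + \<beta>) * exp (b0 * T) - \<beta>) \<le> g k xv T"
    unfolding gf_def b0_def \<beta>_def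
    using terms T j0 by (intro member_le_sum) auto
  moreover have "2 \<le> b0 * ((xv j0 + \<beta>) * exp (b0 * T) - \<beta>)"
  proof -
    have e: "1 + b0 * T \<le> exp (b0 * T)" by (rule exp_ge_add_one_self)
    have "2 = b0 * (\<beta> * (1 + b0 * T) - \<beta>)"
      using b0 \<beta> by (simp add: T_def field_simps)
    also have "\<dots> \<le> b0 * (\<beta> * exp (b0 * T) - \<beta>)"
      using e b0 \<beta> by (intro mult_left_mono) auto
    also have "\<dots> \<le> b0 * ((xv j0 + \<beta>) * exp (b0 * T) - \<beta>)"
      using b0 xv j0 by (intro mult_left_mono) auto
    finally show ?thesis .
  qed
  ultimately have "2 \<le> g k xv T" by linarith
  then obtain t where "0 \<le> t" "t \<le> T" "g k xv t = 2"
    using IVT'[of "g k xv" 0 2 T] g0 T gf_cont by auto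
  then show ?thesis by auto
qed

end


context inst begin

lemma Xsuc_eq: "X (Suc k) j = (X k j + be k j) * exp (b k j * Y k) - be k j"
  by (simp add: upd_def yv_def)

declare xs.simps(2)[simp del]

lemma tst_prop:
  assumes "\<forall>j<n. 0 \<le> xv j" "g k xv 0 < 1"
  shows "0 \<le> tst n A c k xv \<and> g k xv (tst n A c k xv) = 2"
proof -
  have "\<exists>t. 0 \<le> t \<and> g k xv t = 2" using gf_exists[OF assms] by auto
  then have "0 \<le> (SOME t. 0 \<le> t \<and> g k xv t = 2) \<and> g k xv (SOME t. 0 \<le> t \<and> g k xv t = 2) = 2"
    by (rule someI_ex)
  then show ?thesis using assms(2) by (simp add: tst_def)
qed

lemma tst_nn: "\<forall>j<n. 0 \<le> xv j \<Longrightarrow> 0 \<le> tst n A c k xv"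
  using tst_prop[of xv k] by (cases "g k xv 0 < 1") (auto simp: tst_def)

lemma upd_ge:
  assumes xv: "\<forall>j<n. 0 \<le> xv j" and j: "j < n"
  shows "xv j \<le> upd n A c k xv j"
proof -
  have "exp (b k j * tst n A c k xv) \<ge> 1"
    using b_nn[OF j] tst_nn[OF xv, of k] by simp
  then have "(xv j + be k j) * exp (b k j * tst n A c k xv) \<ge> (xv j + be k j) * 1"
    using xv j bet_nn[OF j] by (intro mult_left_mono) auto
  then show ?thesis by (simp add: upd_def)
qed

lemma X_nn: "j < n \<Longrightarrow> 0 \<le> X k j"
proof (induction k arbitrary: j)
  case 0 then show ?case by simp
next
  case (Suc k)
  then show ?case using upd_ge[of "X k" j k] by (fastforce simp: xs.simps)
qed

lemma X_nn_all: "\<forall>j<n. 0 \<le> X k j" using X_nn by auto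

lemma X_step: "j < n \<Longrightarrow> X k j \<le> X (Suc k) j"
  using upd_ge[OF X_nn_all] by (simp add: xs.simps)

lemma X_mono: assumes "j < n" "k \<le> K" shows "X k j \<le> X K j"
  using assms(2)
proof (induction K rule: dec_induct)
  case base then show ?case by simp
next
  case (step K) then show ?case using X_step[OF assms(1), of K] by linarith
qed

lemma Y_nn: "0 \<le> Y k"
  unfolding yv_def by (rule tst_nn[OF X_nn_all])

lemma Y_act: "g k (X k) 0 < 1 \<Longrightarrow> g k (X k) (Y k) = 2"
  using tst_prop[OF X_nn_all] by (simp add: yv_def)

lemma Y_nonact: "\<not> g k (X k) 0 < 1 \<Longrightarrow> Y k = 0"
  by (simp add: yv_def tst_def)

lemma g_Y: "g k (X k) (Y k) = (\<Sum>j<n. b k j * X (Suc k) j)"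
  unfolding gf_def Xsuc_eq by simp

lemma g_0: "g k (X k) 0 = (\<Sum>j<n. b k j * X k j)"
  unfolding gf_def by simp

lemma Y_pos_act: "Y k > 0 \<Longrightarrow> g k (X k) 0 < 1"
  using Y_nonact by force

lemma cover_step: "1 \<le> (\<Sum>j<n. b k j * X (Suc k) j)"
proof (cases "g k (X k) 0 < 1")
  case True then show ?thesis using Y_act g_Y by simp
next
  case False
  then have "Y k = 0" by (rule Y_nonact)
  then have "X (Suc k) = X k" by (simp add: Xsuc_eq[abs_def])
  then show ?thesis using False g_0 by simp
qed

lemma cover: "k < K \<Longrightarrow> 1 \<le> (\<Sum>j<n. b k j * X K j)"
proof -
  assume "k < K"
  have "(\<Sum>j<n. b k j * X (Suc k) j) \<le> (\<Sum>j<n. b k j * X K j)"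
    using \<open>k < K\<close> by (intro sum_mono mult_left_mono X_mono b_nn) auto
  then show ?thesis using cover_step[of k] by linarith
qed

lemma exp_aux: "0 \<le> (u::real) \<Longrightarrow> exp u - 1 \<le> u * exp u"
proof -
  assume "0 \<le> u"
  have "1 + (-u) \<le> exp (-u)" by (rule exp_ge_add_one_self)
  then have "(1 - u) * exp u \<le> exp (-u) * exp u" by (intro mult_right_mono) auto
  also have "\<dots> = 1" by (simp add: exp_minus)
  finally show ?thesis by (simp add: algebra_simps)
qed

lemma dual_step: "(\<Sum>j<n. X (Suc k) j) \<le> (\<Sum>j<n. X k j) + 3 * Y k"
proof (cases "g k (X k) 0 < 1")
  case False
  then have "Y k = 0" by (rule Y_nonact)
  then show ?thesis by (simp add: Xsuc_eq)
next
  case True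
  define t where "t = Y k"
  have t: "0 \<le> t" using Y_nn t_def by simp
  have per: "X (Suc k) j - X k j \<le> t * (b k j * ((X k j + be k j) * exp (b k j * t)))" if j: "j < n" for j
  proof -
    have u: "0 \<le> b k j * t" using b_nn[OF j] t by simp
    have "X (Suc k) j - X k j = (X k j + be k j) * (exp (b k j * t) - 1)"
      by (simp add: Xsuc_eq t_def algebra_simps)
    also have "\<dots> \<le> (X k j + be k j) * ((b k j * t) * exp (b k j * t))"
      using exp_aux[OF u] X_nn[OF j] bet_nn[OF j] by (intro mult_left_mono) auto
    finally show ?thesis by (simp add: algebra_simps)
  qed
  have "(\<Sum>j<n. X (Suc k) j) - (\<Sum>j<n. X k j) = (\<Sum>j<n. X (Suc k) j - X k j)"
    by (simp add: sum_subtractf)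
  also have "\<dots> \<le> (\<Sum>j<n. t * (b k j * ((X k j + be k j) * exp (b k j * t))))"
    using per by (intro sum_mono) auto
  also have "\<dots> = t * (\<Sum>j<n. b k j * ((X k j + be k j) * exp (b k j * t)))"
    by (simp add: sum_distrib_left)
  also have "(\<Sum>j<n. b k j * ((X k j + be k j) * exp (b k j * t))) = g k (X k) t + (\<Sum>j<n. b k j * be k j)"
    unfolding gf_def by (simp add: sum.distrib[symmetric] algebra_simps)
  also have "g k (X k) t = 2" using Y_act[OF True] t_def by simp
  finally have "(\<Sum>j<n. X (Suc k) j) - (\<Sum>j<n. X k j) \<le> t * (2 + (\<Sum>j<n. b k j * be k j))" .
  moreover have "t * (2 + (\<Sum>j<n. b k j * be k j)) \<le> t * 3"
    using S_le1[of k] t by (intro mult_left_mono) auto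
  ultimately show ?thesis using t_def by linarith
qed

lemma dual: "(\<Sum>j<n. X K j) \<le> 3 * (\<Sum>k<K. Y k)"
proof (induction K)
  case 0 then show ?case by simp
next
  case (Suc K) then show ?case using dual_step[of K] by (simp add: algebra_simps)
qed

definition Ld :: "nat \<Rightarrow> nat \<Rightarrow> real" where "Ld K j = (\<Sum>k<K. b k j * Y k)"

lemma Ld_nn: "j < n \<Longrightarrow> 0 \<le> Ld K j"
  unfolding Ld_def by (intro sum_nonneg mult_nonneg_nonneg b_nn Y_nn) auto

lemma inv: "j < n \<Longrightarrow> K \<le> Suc k \<Longrightarrow> (exp (Ld K j) - 1) * be k j \<le> X K j"
proof (induction K arbitrary: k)
  case 0 then show ?case by (simp add: Ld_def)
next
  case (Suc K)
  note j = \<open>j < n\<close>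
  show ?case
  proof (cases "bm K j = 0")
    case True
    have "\<forall>l\<le>K. b l j = 0" using True bmx_ge_l[of _ K j] b_nn[OF j] by (metis order_antisym)
    then have "Ld (Suc K) j = 0" unfolding Ld_def by (intro sum.neutral) auto
    then show ?thesis using X_nn[OF j] by simp
  next
    case False
    then have bpos: "bm K j > 0" using bmx_nn[OF j, of K] by linarith
    have IH: "(exp (Ld K j) - 1) * be K j \<le> X K j" using Suc.IH[of K] j by simp
    have le: "be k j \<le> be K j" using bet_anti[OF j _ bpos] Suc.prems by simp
    have e1: "0 \<le> exp (Ld (Suc K) j) - 1" using Ld_nn[OF j, of "Suc K"] by simp
    have LdS: "Ld (Suc K) j = Ld K j + b K j * Y K" by (simp add: Ld_def)
    have "(exp (Ld (Suc K) j) - 1) * be k j \<le> (exp (Ld (Suc K) j) - 1) * be K j"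
      using e1 le by (intro mult_left_mono) auto
    also have "\<dots> = exp (Ld K j) * be K j * exp (b K j * Y K) - be K j"
      by (simp add: LdS exp_add algebra_simps)
    also have "\<dots> \<le> (X K j + be K j) * exp (b K j * Y K) - be K j"
      using IH by (intro diff_right_mono mult_right_mono) (auto simp: algebra_simps)
    also have "\<dots> = X (Suc K) j" by (simp add: Xsuc_eq)
    finally show ?thesis .
  qed
qed

lemma load_local:
  assumes j: "j < n" and A: "A k j > 0" and Y: "Y k > 0"
  shows "exp (Ld (Suc k) j) - 1 \<le> 2 * real n * bm k j / b k j"
proof -
  have act: "g k (X k) 0 < 1" by (rule Y_pos_act[OF Y])
  have bp: "b k j > 0" by (rule b_pos[OF j A])
  have bmp: "bm k j > 0" using bmx_ge[of k j] bp by linarith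
  have "b k j * X (Suc k) j \<le> (\<Sum>j<n. b k j * X (Suc k) j)"
    using j by (intro member_le_sum mult_nonneg_nonneg b_nn X_nn) auto
  also have "\<dots> = 2" using Y_act[OF act] g_Y by simp
  finally have X2: "b k j * X (Suc k) j \<le> 2" .
  have "(exp (Ld (Suc k) j) - 1) * be k j \<le> X (Suc k) j" using inv[OF j] by simp
  then have "b k j * ((exp (Ld (Suc k) j) - 1) * be k j) \<le> 2"
    using X2 bp by (smt (verit) mult_left_mono)
  then have "(exp (Ld (Suc k) j) - 1) * (b k j / (real n * bm k j)) \<le> 2"
    by (simp add: bet_def algebra_simps)
  then show ?thesis using bp bmp n1 by (simp add: field_simps)
qed

end


locale instm = inst +
  fixes m :: nat
  assumes m1: "m \<ge> 1"
begin

abbreviation "am \<equiv> amax m A"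
abbreviation "an \<equiv> amin m A"

lemma amax_set: "{A i j | i. i < m} = (\<lambda>i. A i j) ` {..<m}" by auto
lemma amin_set: "{A i j | i. i < m \<and> A i j > 0} = (\<lambda>i. A i j) ` {i. i < m \<and> A i j > 0}" by auto

lemma amax_ge: "k < m \<Longrightarrow> A k j \<le> am j"
  unfolding amax_def amax_set by (intro Max_ge) auto

lemma amax_in: "\<exists>i<m. am j = A i j"
proof -
  have "am j \<in> (\<lambda>i. A i j) ` {..<m}" unfolding amax_def amax_set
    using m1 by (intro Max_in) (auto simp: lessThan_empty_iff)
  then show ?thesis by auto
qed

lemma amin_le: "k < m \<Longrightarrow> A k j > 0 \<Longrightarrow> an j \<le> A k j"
  unfolding amin_def amin_set by (intro Min_le) auto

lemma amin_pos: "k < m \<Longrightarrow> A k j > 0 \<Longrightarrow> an j > 0"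
proof -
  assume "k < m" "A k j > 0"
  then have "an j \<in> (\<lambda>i. A i j) ` {i. i < m \<and> A i j > 0}" unfolding amin_def amin_set
    by (intro Min_in) auto
  then show ?thesis by auto
qed

lemma ratio_nn: "j < n \<Longrightarrow> 0 \<le> am j / an j"
proof -
  assume j: "j < n"
  obtain i where i: "i < m" "am j = A i j" using amax_in by auto
  show ?thesis
  proof (cases "A i j > 0")
    case True then show ?thesis using amin_pos[OF i(1) True] i by simp
  next
    case False then have "am j = 0" using i Anneg[OF j, of i] by simp
    then show ?thesis by simp
  qed
qed

lemma bm_le: "j < n \<Longrightarrow> k < m \<Longrightarrow> bm k j \<le> am j / c j"
proof -
  assume j: "j < n" and k: "k < m"
  obtain l where l: "l \<le> k" "bm k j = b l j" using bmx_attained by auto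
  have "A l j \<le> am j" using amax_ge l k by simp
  then show ?thesis using l cpos[OF j] by (simp add: bb_def divide_right_mono)
qed

definition rr :: "nat \<Rightarrow> real" where "rr j = ln (2 * real n * am j / an j + 1)"

lemma r2: "2 * real n * am j / an j = 2 * real n * (am j / an j)" by simp

lemma rr_nn: "j < n \<Longrightarrow> 0 \<le> rr j"
proof -
  assume j: "j < n"
  have "0 \<le> 2 * real n * (am j / an j)" by (intro mult_nonneg_nonneg ratio_nn j) auto
  then have "0 \<le> 2 * real n * am j / an j" by (simp only: r2)
  then show ?thesis unfolding rr_def by (intro ln_ge_zero) auto
qed

lemma Ld_final: assumes j: "j < n" shows "K \<le> m \<Longrightarrow> Ld K j \<le> rr j"
proof (induction K)
  case 0 then show ?case using rr_nn[OF j] by (simp add: Ld_def)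
next
  case (Suc K)
  have LdS: "Ld (Suc K) j = Ld K j + b K j * Y K" by (simp add: Ld_def)
  show ?case
  proof (cases "b K j * Y K = 0")
    case True
    then have "Ld (Suc K) j = Ld K j" using LdS by simp
    then show ?thesis using Suc by simp
  next
    case False
    then have bp: "b K j > 0" and Yp: "Y K > 0"
      using b_nn[OF j, of K] Y_nn[of K] by (auto simp: less_le)
    have Ap: "A K j > 0" using bp cpos[OF j] by (simp add: bb_def zero_less_divide_iff)
    have K: "K < m" using Suc.prems by simp
    have ll: "exp (Ld (Suc K) j) - 1 \<le> 2 * real n * bm K j / b K j" by (rule load_local[OF j Ap Yp])
    have anp: "an j > 0" by (rule amin_pos[OF K Ap])
    have "2 * real n * bm K j / b K j \<le> 2 * real n * (am j / c j) / b K j"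
      using bm_le[OF j K] bp by (intro divide_right_mono mult_left_mono) auto
    also have "\<dots> \<le> 2 * real n * (am j / c j) / (an j / c j)"
    proof (intro divide_left_mono)
      show "an j / c j \<le> b K j" using amin_le[OF K Ap] cpos[OF j] by (simp add: bb_def divide_right_mono)
      show "0 \<le> 2 * real n * (am j / c j)" using ratio_nn[OF j] anp cpos[OF j]
        by (intro mult_nonneg_nonneg divide_nonneg_pos) (auto simp: zero_le_divide_iff)
      show "0 < b K j * (an j / c j)" using bp anp cpos[OF j] by simp
    qed
    also have "\<dots> = 2 * real n * am j / an j" using cpos[OF j] by (simp add: field_simps)
    finally have "exp (Ld (Suc K) j) \<le> 2 * real n * am j / an j + 1" using ll by linarith
    then have "ln (exp (Ld (Suc K) j)) \<le> rr j" unfolding rr_def by (intro ln_mono) auto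
    then show ?thesis by simp
  qed
qed

definition Lam :: real where "Lam = Max {ln (2 * real n * am j / an j + 1) | j. j < n}"

lemma Lam_set: "{ln (2 * real n * am j / an j + 1) | j. j < n} = rr ` {..<n}"
  by (auto simp: rr_def)

lemma rr_le_Lam: "j < n \<Longrightarrow> rr j \<le> Lam"
  unfolding Lam_def Lam_set by (intro Max_ge) auto

lemma Bprime_eq: "Bprime n m A = 3 * Lam"
  unfolding Bprime_def Lam_def by simp

lemma Lam_pos: "Lam > 0"
proof -
  obtain j where j: "j < n" "A 0 j > 0" using Apos by auto
  have "A 0 j \<le> am j" using amax_ge m1 by simp
  then have "am j / an j > 0" using amin_pos[of 0 j] j m1 by simp
  then have "0 < 2 * real n * (am j / an j)" using n1 by (intro mult_pos_pos) auto
  then have "0 < 2 * real n * am j / an j" by (simp only: r2)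
  then have "rr j > 0" unfolding rr_def by (intro ln_gt_zero) auto
  then show ?thesis using rr_le_Lam[OF j(1)] by linarith
qed

lemma weak:
  assumes y: "packing_feasible n m A c y"
  shows "(\<Sum>i<m. y i) \<le> (\<Sum>j<n. X m j)"
proof -
  have y0: "\<And>i. i < m \<Longrightarrow> 0 \<le> y i" and yc: "\<And>j. j < n \<Longrightarrow> (\<Sum>i<m. A i j * y i) \<le> c j"
    using y by (auto simp: packing_feasible_def)
  have "(\<Sum>i<m. y i) \<le> (\<Sum>i<m. y i * (\<Sum>j<n. b i j * X m j))"
  proof (intro sum_mono)
    fix i assume "i \<in> {..<m}"
    then show "y i \<le> y i * (\<Sum>j<n. b i j * X m j)"
      using cover[of i m] y0[of i] by (simp add: mult_le_cancel_left1)
  qed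
  also have "\<dots> = (\<Sum>j<n. X m j * (\<Sum>i<m. b i j * y i))"
    by (simp add: sum_distrib_left sum_distrib_right algebra_simps sum.swap[of _ "{..<m}"])
  also have "\<dots> \<le> (\<Sum>j<n. X m j * 1)"
  proof (intro sum_mono mult_left_mono)
    fix j assume j: "j \<in> {..<n}"
    then have "(\<Sum>i<m. b i j * y i) = (\<Sum>i<m. A i j * y i) / c j"
      by (simp add: bb_def sum_divide_distrib)
    also have "\<dots> \<le> 1" using yc[of j] cpos[of j] j by simp
    finally show "(\<Sum>i<m. b i j * y i) \<le> 1" .
    show "0 \<le> X m j" using X_nn j by simp
  qed
  finally show ?thesis by simp
qed

abbreviation "Fs \<equiv> {(\<Sum>i<m. y i) | y. packing_feasible n m A c y}"

lemma Fs_ne: "Fs \<noteq> {}"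
proof -
  have "packing_feasible n m A c (\<lambda>i. 0)" using cpos by (auto simp: packing_feasible_def less_imp_le)
  then show ?thesis by blast
qed

lemma Fs_bdd: "bdd_above Fs"
  using weak by (auto simp: bdd_above_def)

lemma OPT_le: "OPT n m A c \<le> 3 * (\<Sum>k<m. Y k)"
proof -
  have "OPT n m A c \<le> (\<Sum>j<n. X m j)"
    unfolding OPT_def using Fs_ne weak by (intro cSup_least) auto
  then show ?thesis using dual[of m] by linarith
qed

lemma OPT_ge: "(\<Sum>k<m. Y k) \<le> Lam * OPT n m A c"
proof -
  have feas: "packing_feasible n m A c (\<lambda>i. Y i / Lam)"
    unfolding packing_feasible_def
  proof (intro conjI allI impI)
    fix i show "i < m \<Longrightarrow> 0 \<le> Y i / Lam" using Y_nn Lam_pos by simp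
  next
    fix j assume j: "j < n"
    have "(\<Sum>i<m. A i j * (Y i / Lam)) = c j * Ld m j / Lam"
      unfolding Ld_def using cpos[OF j]
      by (simp add: bb_def sum_divide_distrib sum_distrib_left field_simps)
    also have "\<dots> \<le> c j * Lam / Lam"
      using Ld_final[OF j, of m] rr_le_Lam[OF j] cpos[OF j] Lam_pos
      by (intro divide_right_mono mult_left_mono) auto
    also have "\<dots> = c j" using Lam_pos by simp
    finally show "(\<Sum>i<m. A i j * (Y i / Lam)) \<le> c j" .
  qed
  have "(\<Sum>i<m. Y i / Lam) \<le> OPT n m A c"
    unfolding OPT_def using feas Fs_bdd by (intro cSup_upper) auto
  then show ?thesis using Lam_pos by (simp add: sum_divide_distrib[symmetric] field_simps)
qed

lemma Y0_pos: "Y 0 > 0"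
proof -
  have g0: "g 0 (X 0) 0 = 0" using g_0[of 0] by simp
  then have "g 0 (X 0) 0 < 1" by simp
  then have g2: "g 0 (X 0) (Y 0) = 2" by (rule Y_act)
  have "Y 0 \<noteq> 0"
  proof
    assume "Y 0 = 0" then show False using g0 g2 by simp
  qed
  then show ?thesis using Y_nn[of 0] by simp
qed

lemma sumY_pos: "(\<Sum>k<m. Y k) > 0"
proof -
  have "Y 0 \<le> (\<Sum>k<m. Y k)" using m1 Y_nn by (intro member_le_sum) auto
  then show ?thesis using Y0_pos by linarith
qed

lemma OPT_pos: "OPT n m A c > 0"
  using OPT_ge sumY_pos Lam_pos by (smt (verit) mult_nonpos_nonneg mult_le_0_iff)

end


context instm begin

definition js :: "nat \<Rightarrow> nat" where "js k = (SOME j. j < n \<and> (\<forall>j'<n. b k j' \<le> b k j))"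

lemma js_prop: "js k < n \<and> (\<forall>j'<n. b k j' \<le> b k (js k))"
proof -
  have ne: "b k ` {..<n} \<noteq> {}" using n1 by (auto simp: lessThan_empty_iff)
  have "Max (b k ` {..<n}) \<in> b k ` {..<n}" using ne by (intro Max_in) auto
  then obtain j where j: "j < n" "b k j = Max (b k ` {..<n})" by auto
  have "\<forall>j'<n. b k j' \<le> b k j" using j by auto
  then have "\<exists>j. j < n \<and> (\<forall>j'<n. b k j' \<le> b k j)" using j by auto
  then show ?thesis unfolding js_def by (rule someI_ex)
qed

lemma js_pos: "b k (js k) > 0"
proof -
  obtain j where "j < n" "A k j > 0" using Apos by auto
  then show ?thesis using b_pos js_prop by (meson less_le_trans)
qed

lemma mult_bound:
  assumes Y: "Y k > 0"
  shows "3/2 \<le> exp (b k (js k) * Y k)"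
proof -
  define t where "t = Y k"
  define M where "M = exp (b k (js k) * t)"
  define S where "S = (\<Sum>j<n. b k j * be k j)"
  have act: "g k (X k) 0 < 1" by (rule Y_pos_act[OF Y])
  have t: "t > 0" using Y t_def by simp
  have S: "0 \<le> S" "S \<le> 1" using S_nn S_le1 S_def by auto
  have "2 + S = g k (X k) t + S" using Y_act[OF act] t_def by simp
  also have "\<dots> = (\<Sum>j<n. b k j * (X k j + be k j) * exp (b k j * t))"
    unfolding gf_def S_def by (simp add: sum.distrib[symmetric] algebra_simps)
  also have "\<dots> \<le> (\<Sum>j<n. b k j * (X k j + be k j) * M)"
  proof (intro sum_mono mult_left_mono)
    fix j assume j: "j \<in> {..<n}"
    show "exp (b k j * t) \<le> M" unfolding M_def using js_prop[of k] j t
      by (auto intro: mult_right_mono)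
    show "0 \<le> b k j * (X k j + be k j)" using j b_nn X_nn bet_nn by simp
  qed
  also have "\<dots> = M * (g k (X k) 0 + S)"
    unfolding g_0 S_def by (simp add: sum_distrib_left sum.distrib algebra_simps)
  also have "\<dots> < M * (1 + S)" using act M_def by simp
  finally have *: "2 + S < M * (1 + S)" .
  show ?thesis
  proof (rule ccontr)
    assume "\<not> 3/2 \<le> exp (b k (js k) * Y k)"
    then have "M \<le> 3/2" using M_def t_def by simp
    then have "M * (1 + S) \<le> 3/2 * (1 + S)" using S by (intro mult_right_mono) auto
    moreover have "3/2 * (1 + S) = 3/2 + 3/2 * S" by (simp add: algebra_simps)
    ultimately show False using * S by linarith
  qed
qed

lemma growth:
  assumes Y: "Y k > 0"
  shows "3/2 * X k (js k) \<le> X (Suc k) (js k) \<and> be k (js k) / 2 \<le> X (Suc k) (js k)"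
proof -
  define j where "j = js k"
  have j: "j < n" using js_prop j_def by simp
  have M: "3/2 \<le> exp (b k j * Y k)" using mult_bound[OF Y] j_def by simp
  have nn: "0 \<le> X k j + be k j" using X_nn[OF j] bet_nn[OF j] by simp
  have "(X k j + be k j) * (3/2) \<le> (X k j + be k j) * exp (b k j * Y k)"
    using M nn by (intro mult_left_mono) auto
  then have "3/2 * X k j + be k j / 2 \<le> X (Suc k) j" by (simp add: Xsuc_eq algebra_simps)
  moreover have "0 \<le> X k j" "0 \<le> be k j" using X_nn[OF j] bet_nn[OF j] by auto
  ultimately show ?thesis unfolding j_def[symmetric] by (intro conjI) linarith+
qed

abbreviation "al \<equiv> alpha n m A c"

lemma alpha_set: "{am j / c j | j. j < n} = (\<lambda>j. am j / c j) ` {..<n}" by auto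

lemma bm_le_alpha: "j < n \<Longrightarrow> k < m \<Longrightarrow> bm k j \<le> al"
proof -
  assume j: "j < n" and k: "k < m"
  have "am j / c j \<le> al" unfolding alpha_def alpha_set using j by (intro Max_ge) auto
  then show ?thesis using bm_le[OF j k] by linarith
qed

lemma alpha_pos: "al > 0"
  using bm_le_alpha[of "js 0" 0] js_prop[of 0] js_pos[of 0] bmx_ge[of 0 "js 0"] m1 by linarith

lemma be_low: "k < m \<Longrightarrow> Y k > 0 \<Longrightarrow> 1 / (real n * al) \<le> be k (js k)"
proof -
  assume k: "k < m" and "Y k > 0"
  have j: "js k < n" using js_prop by simp
  have bp: "bm k (js k) > 0" using js_pos[of k] bmx_ge[of k "js k"] by linarith
  have "bm k (js k) \<le> al" by (rule bm_le_alpha[OF j k])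
  then show ?thesis unfolding bet_def using bp n1
    by (intro divide_left_mono mult_left_mono mult_pos_pos) auto
qed

definition NN :: "nat \<Rightarrow> nat \<Rightarrow> nat" where "NN K j = card {k. k < K \<and> Y k > 0 \<and> js k = j}"

lemma cnt:
  assumes j: "j < n"
  shows "K \<le> m \<Longrightarrow> NN K j \<ge> 1 \<Longrightarrow> (3/2) ^ (NN K j - 1) / (2 * real n * al) \<le> X K j"
proof (induction K)
  case 0 then show ?case by (simp add: NN_def)
next
  case (Suc K)
  have K: "K < m" using Suc.prems by simp
  show ?case
  proof (cases "Y K > 0 \<and> js K = j")
    case False
    then have "{k. k < Suc K \<and> Y k > 0 \<and> js k = j} = {k. k < K \<and> Y k > 0 \<and> js k = j}"
      by (auto simp: less_Suc_eq)
    then have "NN (Suc K) j = NN K j" by (simp add: NN_def)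
    then show ?thesis using Suc X_step[OF j, of K] by fastforce
  next
    case True
    then have "{k. k < Suc K \<and> Y k > 0 \<and> js k = j} = insert K {k. k < K \<and> Y k > 0 \<and> js k = j}"
      by (auto simp: less_Suc_eq)
    then have NS: "NN (Suc K) j = Suc (NN K j)" by (simp add: NN_def)
    have gr: "3/2 * X K j \<le> X (Suc K) j" "be K j / 2 \<le> X (Suc K) j"
      using growth[of K] True by auto
    have bl: "1 / (real n * al) \<le> be K j" using be_low[OF K] True by auto
    have pos: "0 < 2 * real n * al" using alpha_pos n1 by simp
    show ?thesis
    proof (cases "NN K j = 0")
      case True
      have "1 / (2 * real n * al) = (1 / (real n * al)) / 2" by simp
      also have "\<dots> \<le> X (Suc K) j" using divide_right_mono[OF bl, of 2] gr(2) by linarith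
      finally show ?thesis using NS True by simp
    next
      case False
      then have IH: "(3/2) ^ (NN K j - 1) / (2 * real n * al) \<le> X K j" using Suc K by simp
      have "(3/2) ^ (NN (Suc K) j - 1) / (2 * real n * al) = 3/2 * ((3/2) ^ (NN K j - 1) / (2 * real n * al))"
        using NS False by (cases "NN K j") auto
      also have "\<dots> \<le> 3/2 * X K j" using IH by simp
      also have "\<dots> \<le> X (Suc K) j" using gr by simp
      finally show ?thesis .
    qed
  qed
qed

lemma ln32: "1/3 \<le> ln (3/2::real)"
proof -
  have "ln (2/3::real) \<le> 2/3 - 1" by (rule ln_le_minus_one) auto
  moreover have "ln (2/3::real) = - ln (3/2)" by (simp add: ln_div)
  ultimately show ?thesis by simp
qed

definition RR :: real where "RR = 2 * real n * al * Bprime n m A * OPT n m A c"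

lemma RR_pos: "RR > 0"
  unfolding RR_def Bprime_eq using n1 alpha_pos Lam_pos OPT_pos by simp

lemma NN_bound: "j < n \<Longrightarrow> real (NN m j) \<le> 1 + 3 * \<bar>ln RR\<bar>"
proof -
  assume j: "j < n"
  show ?thesis
  proof (cases "NN m j \<ge> 1")
    case False then show ?thesis by simp
  next
    case True
    have pos: "0 < 2 * real n * al" using alpha_pos n1 by simp
    have "X m j \<le> (\<Sum>j<n. X m j)" using j X_nn by (intro member_le_sum) auto
    also have "\<dots> \<le> 3 * (\<Sum>k<m. Y k)" by (rule dual)
    also have "\<dots> \<le> 3 * (Lam * OPT n m A c)" using OPT_ge by simp
    finally have Xm: "X m j \<le> Bprime n m A * OPT n m A c" by (simp add: Bprime_eq)
    have "(3/2) ^ (NN m j - 1) / (2 * real n * al) \<le> X m j" using cnt[OF j] True by simp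
    then have "(3/2) ^ (NN m j - 1) \<le> X m j * (2 * real n * al)" using pos_divide_le_eq[OF pos] by blast
    then have "(3/2) ^ (NN m j - 1) \<le> 2 * real n * al * X m j" by (simp only: mult.commute)
    also have "\<dots> \<le> 2 * real n * al * (Bprime n m A * OPT n m A c)"
      by (rule mult_left_mono[OF Xm]) (use pos in linarith)
    also have "\<dots> = RR" by (simp add: RR_def mult.assoc)
    finally have "ln ((3/2) ^ (NN m j - 1)) \<le> ln RR" by (intro ln_mono) auto
    then have "real (NN m j - 1) * ln (3/2) \<le> ln RR" by (simp add: ln_realpow)
    moreover have "real (NN m j - 1) * (1/3) \<le> real (NN m j - 1) * ln (3/2)"
      using ln32 by (intro mult_left_mono) auto
    ultimately have "real (NN m j - 1) \<le> 3 * ln RR" by linarith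
    then show ?thesis using True by (simp add: of_nat_diff)
  qed
qed

lemma card_E: "real (card {i. i < m \<and> Y i > 0}) \<le> real n * (1 + 3 * \<bar>ln RR\<bar>)"
proof -
  have "{i. i < m \<and> Y i > 0} \<subseteq> (\<Union>j\<in>{..<n}. {k. k < m \<and> Y k > 0 \<and> js k = j})"
    using js_prop by auto
  then have "card {i. i < m \<and> Y i > 0} \<le> card (\<Union>j\<in>{..<n}. {k. k < m \<and> Y k > 0 \<and> js k = j})"
    by (intro card_mono) auto
  also have "\<dots> \<le> (\<Sum>j<n. NN m j)" unfolding NN_def by (rule card_UN_le) auto
  finally have "real (card {i. i < m \<and> Y i > 0}) \<le> (\<Sum>j<n. real (NN m j))"
    by (metis of_nat_le_iff of_nat_sum)
  also have "\<dots> \<le> (\<Sum>j<n. 1 + 3 * \<bar>ln RR\<bar>)" using NN_bound by (intro sum_mono) auto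
  finally show ?thesis by simp
qed

lemma lnRR: "\<bar>ln RR\<bar> \<le> 1 + real n + \<bar>ln (Bprime n m A)\<bar> + \<bar>ln (OPT n m A c)\<bar> + \<bar>ln al\<bar>"
proof -
  have Bp: "Bprime n m A > 0" using Bprime_eq Lam_pos by simp
  have np: "real n > 0" using n1 by simp
  have "ln RR = ln 2 + ln (real n) + ln al + ln (Bprime n m A) + ln (OPT n m A c)"
    unfolding RR_def using Bp np alpha_pos OPT_pos by (simp add: ln_mult)
  moreover have "0 \<le> ln (real n)" "ln (real n) \<le> real n" using n1 ln_le_minus_one[OF np] by auto
  moreover have "0 \<le> ln (2::real)" "ln (2::real) \<le> 1" using ln_le_minus_one[of "2::real"] by auto
  ultimately show ?thesis by linarith
qed

lemma rounds: "real (card {i. i < m \<and> Y i > 0})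
   \<le> 4 * (1 + real n + \<bar>ln (Bprime n m A)\<bar> + \<bar>ln (OPT n m A c)\<bar> + \<bar>ln al\<bar>) ^ 2"
proof -
  define P where "P = 1 + real n + \<bar>ln (Bprime n m A)\<bar> + \<bar>ln (OPT n m A c)\<bar> + \<bar>ln al\<bar>"
  have P1: "P \<ge> 1" "real n \<le> P" unfolding P_def by auto
  have "real (card {i. i < m \<and> Y i > 0}) \<le> real n * (1 + 3 * \<bar>ln RR\<bar>)" by (rule card_E)
  also have "\<dots> \<le> P * (1 + 3 * P)" using lnRR P1 unfolding P_def[symmetric]
    by (intro mult_mono) auto
  also have "\<dots> \<le> 4 * P ^ 2" using P1 by (simp add: power2_eq_square algebra_simps)
  finally show ?thesis unfolding P_def .
qed

lemma comp: "OPT n m A c / B \<le> (\<Sum>i<m. 3 / B * Y i)" if "B > 0"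
proof -
  have "(\<Sum>i<m. 3 / B * Y i) = (3 * (\<Sum>k<m. Y k)) / B" by (simp add: sum_distrib_left sum_divide_distrib)
  moreover have "OPT n m A c / B \<le> (3 * (\<Sum>k<m. Y k)) / B" using OPT_le that by (intro divide_right_mono) auto
  ultimately show ?thesis by simp
qed

lemma loadj:
  assumes j: "j < n" and ex: "\<exists>i<m. A i j > 0" and B: "B > 0"
  shows "(\<Sum>i<m. A i j * (3 / B * Y i)) \<le> c j * (6 * (1 + ln (real n) + ln (am j / an j)) / B)"
proof -
  obtain i where i: "i < m" "A i j > 0" using ex by auto
  have anp: "an j > 0" by (rule amin_pos[OF i])
  have "an j \<le> am j" using amin_le[OF i] amax_ge[OF i(1), of j] by linarith
  then have r1: "1 \<le> am j / an j" using anp by simp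
  have np: "real n \<ge> 1" using n1 by simp
  have rrb: "rr j \<le> ln 3 + ln (real n) + ln (am j / an j)"
  proof -
    have "1 \<le> real n * (am j / an j)" using r1 np by (metis mult_mono' mult_1 zero_le_one)
    moreover have "2 * real n * am j / an j + 1 = 2 * (real n * (am j / an j)) + 1" by simp
    moreover have "3 * real n * (am j / an j) = 3 * (real n * (am j / an j))" by simp
    ultimately have le: "2 * real n * am j / an j + 1 \<le> 3 * real n * (am j / an j)" by linarith
    have "0 \<le> 2 * (real n * (am j / an j))" using \<open>1 \<le> real n * (am j / an j)\<close> by linarith
    then have p: "0 < 2 * real n * am j / an j + 1"
      using \<open>2 * real n * am j / an j + 1 = 2 * (real n * (am j / an j)) + 1\<close> by linarith
    have "rr j \<le> ln (3 * real n * (am j / an j))" unfolding rr_def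
      by (rule ln_mono[OF le p])
    also have "\<dots> = ln (3 * real n) + ln (am j / an j)"
      by (rule ln_mult_pos) (use np r1 in auto)
    also have "ln (3 * real n) = ln 3 + ln (real n)" by (rule ln_mult_pos) (use np in auto)
    finally show ?thesis .
  qed
  have "(\<Sum>i<m. A i j * (3 / B * Y i)) = 3 / B * c j * Ld m j"
    unfolding Ld_def using cpos[OF j] by (simp add: bb_def sum_distrib_left field_simps)
  also have "\<dots> \<le> 3 / B * c j * rr j"
    using Ld_final[OF j, of m] cpos[OF j] B by (intro mult_left_mono) auto
  also have "\<dots> \<le> 3 / B * c j * (ln 3 + ln (real n) + ln (am j / an j))"
    using rrb cpos[OF j] B by (intro mult_left_mono) auto
  finally have *: "(\<Sum>i<m. A i j * (3 / B * Y i)) \<le> 3 / B * c j * (ln 3 + ln (real n) + ln (am j / an j))" .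
  have l3: "ln (3::real) \<le> 2" using ln_le_minus_one[of "3::real"] by simp
  have "ln 3 + ln (real n) + ln (am j / an j) \<le> 2 * (1 + ln (real n) + ln (am j / an j))"
    using l3 ln_ge_zero[OF np] ln_ge_zero[OF r1] by simp
  then have "3 / B * c j * (ln 3 + ln (real n) + ln (am j / an j)) \<le> 3 / B * c j * (2 * (1 + ln (real n) + ln (am j / an j)))"
    using cpos[OF j] B by (intro mult_left_mono) auto
  also have "\<dots> = c j * (6 * (1 + ln (real n) + ln (am j / an j)) / B)" by simp
  finally show ?thesis using * by linarith
qed

end


lemma same_m:
  assumes "\<forall>i<m. \<forall>j. A0 i j = A i j"
  shows "amax m A0 = amax m A" "amin m A0 = amin m A" "OPT n m A0 c = OPT n m A c"
    "alpha n m A0 c = alpha n m A c" "Bprime n m A0 = Bprime n m A"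
proof -
  have a1: "\<And>j. {A0 i j | i. i < m} = {A i j | i. i < m}"
  proof -
    fix j
    have "(\<lambda>i. A0 i j) ` {..<m} = (\<lambda>i. A i j) ` {..<m}" using assms by (intro image_cong) auto
    moreover have "{A0 i j | i. i < m} = (\<lambda>i. A0 i j) ` {..<m}" "{A i j | i. i < m} = (\<lambda>i. A i j) ` {..<m}" by auto
    ultimately show "{A0 i j | i. i < m} = {A i j | i. i < m}" by simp
  qed
  have a2: "\<And>j. {A0 i j | i. i < m \<and> A0 i j > 0} = {A i j | i. i < m \<and> A i j > 0}"
  proof (intro set_eqI iffI)
    fix j x assume "x \<in> {A0 i j | i. i < m \<and> A0 i j > 0}"
    then obtain i where "x = A0 i j" "i < m" "A0 i j > 0" by auto
    then show "x \<in> {A i j | i. i < m \<and> A i j > 0}" using assms by auto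
  next
    fix j x assume "x \<in> {A i j | i. i < m \<and> A i j > 0}"
    then obtain i where "x = A i j" "i < m" "A i j > 0" by auto
    then have "x = A0 i j \<and> i < m \<and> A0 i j > 0" using assms by auto
    then show "x \<in> {A0 i j | i. i < m \<and> A0 i j > 0}" by blast
  qed
  show e1: "amax m A0 = amax m A" unfolding amax_def a1 ..
  show e2: "amin m A0 = amin m A" unfolding amin_def a2 ..
  have "\<And>y. packing_feasible n m A0 c y = packing_feasible n m A c y"
    unfolding packing_feasible_def using assms by simp
  then show "OPT n m A0 c = OPT n m A c" unfolding OPT_def by simp
  show "alpha n m A0 c = alpha n m A c" unfolding alpha_def e1 ..
  show "Bprime n m A0 = Bprime n m A" unfolding Bprime_def e1 e2 ..
qed

theorem theoremD1:
  shows "\<exists>(K::real) (C::real) (d::nat). K > 0 \<and> C > 0 \<and>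
    (\<forall>B::real. B > 0 \<longrightarrow> (\<exists>alg :: online_alg.
      \<forall>n m (A :: nat \<Rightarrow> nat \<Rightarrow> real) (c :: nat \<Rightarrow> real).
        valid_instance n m A c \<longrightarrow>
          (\<forall>i<m. run alg n A c i \<ge> 0)
        \<and> (\<Sum>i<m. run alg n A c i) \<ge> OPT n m A c / B
        \<and> real (card {i. i < m \<and> run alg n A c i > 0})
            \<le> C * (1 + real n + \<bar>ln (Bprime n m A)\<bar> + \<bar>ln (OPT n m A c)\<bar>
                     + \<bar>ln (alpha n m A c)\<bar>) ^ d
        \<and> (\<forall>j<n. (\<exists>i<m. A i j > 0) \<longrightarrow>
            (\<Sum>i<m. A i j * run alg n A c i)
              \<le> c j * (K * (1 + ln (real n) + ln (amax m A j / amin m A j)) / B))))"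
proof (rule exI[of _ "6::real"], rule exI[of _ "4::real"], rule exI[of _ "2::nat"], intro conjI allI impI)
  fix B :: real assume B: "B > 0"
  show "\<exists>alg :: online_alg.
      \<forall>n m (A :: nat \<Rightarrow> nat \<Rightarrow> real) (c :: nat \<Rightarrow> real).
        valid_instance n m A c \<longrightarrow>
          (\<forall>i<m. run alg n A c i \<ge> 0)
        \<and> (\<Sum>i<m. run alg n A c i) \<ge> OPT n m A c / B
        \<and> real (card {i. i < m \<and> run alg n A c i > 0})
            \<le> 4 * (1 + real n + \<bar>ln (Bprime n m A)\<bar> + \<bar>ln (OPT n m A c)\<bar>
                     + \<bar>ln (alpha n m A c)\<bar>) ^ 2
        \<and> (\<forall>j<n. (\<exists>i<m. A i j > 0) \<longrightarrow>
            (\<Sum>i<m. A i j * run alg n A c i)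
              \<le> c j * (6 * (1 + ln (real n) + ln (amax m A j / amin m A j)) / B))"
  proof (intro exI[of _ "theAlg B"] allI impI)
    fix n m and A :: "nat \<Rightarrow> nat \<Rightarrow> real" and c :: "nat \<Rightarrow> real"
    assume v: "valid_instance n m A c"
    define A0 where "A0 = (\<lambda>k j. if k < m then A k j else A 0 j)"
    have agree: "\<forall>i<m. \<forall>j. A0 i j = A i j" by (simp add: A0_def)
    have m1: "m \<ge> 1" using v by (simp add: valid_instance_def)
    interpret I: instm n A0 c m
    proof
      show "1 \<le> n" "1 \<le> m" using v by (auto simp: valid_instance_def)
      show "\<And>j. j < n \<Longrightarrow> 0 < c j" using v by (auto simp: valid_instance_def)
      show "\<And>k j. j < n \<Longrightarrow> 0 \<le> A0 k j" using v m1 by (auto simp: valid_instance_def A0_def)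
      show "\<And>k. \<exists>j<n. 0 < A0 k j"
      proof -
        fix k
        have "\<exists>j<n. 0 < A (if k < m then k else 0) j" using v m1 by (auto simp: valid_instance_def)
        then show "\<exists>j<n. 0 < A0 k j" by (auto simp: A0_def split: if_splits)
      qed
    qed
    note sm = same_m[OF agree]
    have run_eq: "\<And>i. i < m \<Longrightarrow> run (theAlg B) n A c i = 3 / B * yv n A0 c i"
    proof -
      fix i assume i: "i < m"
      have "yv n A c i = yv n A0 c i" using i by (intro yv_cong) (auto simp: A0_def)
      then show "run (theAlg B) n A c i = 3 / B * yv n A0 c i" by (simp add: run_theAlg)
    qed
    have s1: "(\<Sum>i<m. run (theAlg B) n A c i) = (\<Sum>i<m. 3 / B * yv n A0 c i)"
      using run_eq by (intro sum.cong) auto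
    have s2: "{i. i < m \<and> run (theAlg B) n A c i > 0} = {i. i < m \<and> yv n A0 c i > 0}"
      using run_eq B by (auto simp: zero_less_mult_iff zero_less_divide_iff)
    show "(\<forall>i<m. run (theAlg B) n A c i \<ge> 0)
        \<and> (\<Sum>i<m. run (theAlg B) n A c i) \<ge> OPT n m A c / B
        \<and> real (card {i. i < m \<and> run (theAlg B) n A c i > 0})
            \<le> 4 * (1 + real n + \<bar>ln (Bprime n m A)\<bar> + \<bar>ln (OPT n m A c)\<bar>
                     + \<bar>ln (alpha n m A c)\<bar>) ^ 2
        \<and> (\<forall>j<n. (\<exists>i<m. A i j > 0) \<longrightarrow>
            (\<Sum>i<m. A i j * run (theAlg B) n A c i)
              \<le> c j * (6 * (1 + ln (real n) + ln (amax m A j / amin m A j)) / B))"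
    proof (intro conjI allI impI)
      fix i assume "i < m"
      then show "run (theAlg B) n A c i \<ge> 0" using run_eq I.Y_nn B by simp
    next
      show "(\<Sum>i<m. run (theAlg B) n A c i) \<ge> OPT n m A c / B"
        using I.comp[OF B] s1 sm by simp
    next
      show "real (card {i. i < m \<and> run (theAlg B) n A c i > 0})
            \<le> 4 * (1 + real n + \<bar>ln (Bprime n m A)\<bar> + \<bar>ln (OPT n m A c)\<bar>
                     + \<bar>ln (alpha n m A c)\<bar>) ^ 2"
        using I.rounds s2 sm by simp
    next
      fix j assume j: "j < n" and ex: "\<exists>i<m. A i j > 0"
      have ex0: "\<exists>i<m. A0 i j > 0" using ex agree by auto
      have "(\<Sum>i<m. A i j * run (theAlg B) n A c i) = (\<Sum>i<m. A0 i j * (3 / B * yv n A0 c i))"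
        using run_eq agree by (intro sum.cong) auto
      also have "\<dots> \<le> c j * (6 * (1 + ln (real n) + ln (amax m A0 j / amin m A0 j)) / B)"
        by (rule I.loadj[OF j ex0 B])
      finally show "(\<Sum>i<m. A i j * run (theAlg B) n A c i)
              \<le> c j * (6 * (1 + ln (real n) + ln (amax m A j / amin m A j)) / B)"
        using sm by simp
    qed
  qed
qed simp_all


end
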